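(* For every signature $\Sigma$, the data $\mathcal F_\Sigma$ described below form a category with families. Moreover, if the variable system has the de Bruijn property, then $\mathcal F_\Sigma$ is a contextual category with families.
   Context: Fix an infinite set $V$ of variables with decidable equality, and a fresh variable provider: functions $\varphi,\mathsf{fr}$ assigning to each finite $X\subseteq V$ an inhabited subset $\varphi(X)\subseteq V\setminus X$ and an element $\mathsf{fr}(X)\in\varphi(X)$. The variable system has the de Bruijn property if $\varphi(X)=\{\mathsf{fr}(X)\}$ for all finite $X$. Fix disjoint sets $F$ (function symbols) and $T$ (type symbols) with decidable equality. Preelements are terms built from variables and symbols of $F$; a pretype is $S(t_1,\ldots,t_n)$ with $S\in T$ and $t_i$ preelements. $\mathrm{V}(E)$ is the set of variables of an expression $E$, $\equiv$ is syntactic identity, and $E[\bar a/\bar x]$ is simultaneous substitution. A precontext is a sequence $\Gamma=x_1:A_1,\ldots,x_n:A_n$ of pretypes with $x_k\in\varphi(\{x_1,\ldots,x_{k-1}\})$ and $\mathrm{V}(A_k)\subseteq\{x_1,\ldots,x_{k-1}\}$; $\mathrm{OV}(\Gamma)=x_1,\ldots,x_n$, $\mathrm{V}(\Gamma)=\{x_1,\ldots,x_n\}$, $\mathrm{Fresh}(\Gamma)=\varphi(\mathrm{V}(\Gamma))$, $\mathrm{fresh}(\Gamma)=\mathsf{fr}(\mathrm{V}(\Gamma))$, $E[\bar a/\Gamma]=E[\bar a/x_1,\ldots,x_n]$. Top variables: $\mathrm{TV}(\langle\rangle)=\emptyset$, $\mathrm{TV}(\Gamma,x:A)=(\mathrm{TV}(\Gamma)\setminus\mathrm{V}(A))\cup\{x\}$.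 A determining sequence for $\Gamma$ is a strictly increasing $\bar i=i_1,\ldots,i_k$ in $\{1,\ldots,n\}$ with $\mathrm{TV}(\Gamma)\subseteq\{x_{i_1},\ldots,x_{i_k}\}$; for $\bar a=a_1,\ldots,a_n$ put $\bar a_{\bar i}=a_{i_1},\ldots,a_{i_k}$. A type predeclaration is $(\Gamma,S,\bar i)$ with $S\in T$, $\bar i$ determining; a function predeclaration is $(\Gamma,f,\bar i,U)$ with $f\in F$, $\bar i$ determining, $U$ a pretype with $\mathrm{V}(U)\subseteq\mathrm{V}(\Gamma)$. A presignature is a set $\Sigma$ of predeclarations with no symbol declared twice. Judgements are "$\Gamma$ context", "$A$ type $(\Gamma)$", "$a:A\ (\Gamma)$". $\mathcal{J}(\Sigma)$ is the smallest set of judgements closed under: (R1) $\langle\rangle$ context; (R2) from $\Gamma$ context and $A$ type $(\Gamma)$ infer $\Gamma,x:A$ context, for $x\in\mathrm{Fresh}(\Gamma)$; (R3) from $x_1:A_1,\ldots,x_n:A_n$ context infer $x_i:A_i\ (x_1:A_1,\ldots,x_n:A_n)$; (R4) if $(\Gamma,S,\bar i)\in\Sigma$ and $\bar a:\Delta\to\Gamma$, infer $S(\bar a_{\bar i})$ type $(\Delta)$; (R5) if $(\Gamma,f,\bar i,U)\in\Sigma$, $\bar a:\Delta\to\Gamma$ and $U[\bar a/\Gamma]$ type $(\Delta)$, infer $f(\bar a_{\bar i}):U[\bar a/\Gamma]\ (\Delta)$. Here, for $\Gamma=x_1:A_1,\ldots,x_n:A_n$, the context map "$\bar a:\Delta\to\Gamma$"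 abbreviates the $n+2$ judgements $\Delta$ context, $\Gamma$ context, and $a_k:A_k[a_1,\ldots,a_{k-1}/x_1,\ldots,x_{k-1}]\ (\Delta)$ for $k=1,\ldots,n$. $\Sigma$ is a signature if ($\Gamma$ context)$\in\mathcal{J}(\Sigma)$ whenever $(\Gamma,S,\bar i)\in\Sigma$, and ($U$ type $(\Gamma)$)$\in\mathcal{J}(\Sigma)$ whenever $(\Gamma,f,\bar i,U)\in\Sigma$. A category with families (cwf) consists of: a category $\mathcal C$ with a terminal object $\top$; for each object $\Gamma$ a class $\mathrm{Ty}(\Gamma)$, and for $f:\Delta\to\Gamma$ a function $A\mapsto A\{f\}:\mathrm{Ty}(\Gamma)\to\mathrm{Ty}(\Delta)$ with $A\{1\}=A$, $A\{f\circ g\}=A\{f\}\{g\}$; for $A\in\mathrm{Ty}(\Gamma)$ an object $\Gamma.A$ and a morphism $\mathrm{p}(A)=\mathrm{p}_\Gamma(A):\Gamma.A\to\Gamma$; for $A\in\mathrm{Ty}(\Gamma)$ a class $\mathrm{Tm}(\Gamma,A)$ and for $f:\Delta\to\Gamma$ a function $a\mapsto a\{f\}:\mathrm{Tm}(\Gamma,A)\to\mathrm{Tm}(\Delta,A\{f\})$ with $a\{1\}=a$, $a\{f\circ g\}=a\{f\}\{g\}$; for each $A\in\mathrm{Ty}(\Gamma)$ an element $\mathrm{v}_A\in\mathrm{Tm}(\Gamma.A,A\{\mathrm{p}(A)\})$; for $f:\Delta\to\Gamma$ and $a\in\mathrm{Tm}(\Delta,A\{f\})$ a morphism $\langle f,a\rangle_A:\Delta\to\Gamma.A$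 such that $\mathrm{p}(A)\circ\langle f,a\rangle_A=f$, $\mathrm{v}_A\{\langle f,a\rangle_A\}=a$, $\langle\mathrm{p}(A)\circ h,\mathrm{v}_A\{h\}\rangle_A=h$ for every $h:\Delta\to\Gamma.A$, and $\langle f,a\rangle_A\circ g=\langle f\circ g,a\{g\}\rangle_A$. A cwf is contextual if every object $\Gamma$ equals $\top.A_1.\cdots.A_n$ for a unique sequence $A_1\in\mathrm{Ty}(\top)$, $A_2\in\mathrm{Ty}(\top.A_1)$, $\ldots$, $A_n\in\mathrm{Ty}(\top.A_1.\cdots.A_{n-1})$, $n\ge 0$. The data $\mathcal F_\Sigma$: objects are precontexts $\Gamma$ with ($\Gamma$ context)$\in\mathcal{J}(\Sigma)$; morphisms $\Delta\to\Gamma$ are triples $(\Delta,\Gamma,\bar a)$ with $\bar a:\Delta\to\Gamma$ a context map in $\mathcal{J}(\Sigma)$; composition $(\Gamma,\Theta,\bar t)\circ(\Delta,\Gamma,\bar s)=(\Delta,\Theta,(t_1[\bar s/\Gamma],\ldots,t_k[\bar s/\Gamma]))$; identity $(\Gamma,\Gamma,\mathrm{OV}(\Gamma))$; terminal object the empty context $\langle\rangle$. $\mathrm{Ty}(\Gamma)=\{(\Gamma,A): (A\text{ type }(\Gamma))\in\mathcal{J}(\Sigma)\}$ with $(\Gamma,A)\{(\Delta,\Gamma,\bar a)\}=(\Delta,A[\bar a/\Gamma])$; $\mathrm{Tm}(\Gamma,(\Gamma,A))=\{((\Gamma,A),a): (a:A\ (\Gamma))\in\mathcal{J}(\Sigma)\}$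 with $((\Gamma,A),a)\{(\Delta,\Gamma,\bar a)\}=((\Delta,A[\bar a/\Gamma]),a[\bar a/\Gamma])$. For $\mathrm S=(\Gamma,S)\in\mathrm{Ty}(\Gamma)$: $\Gamma.\mathrm S=\langle\Gamma,\mathrm{fresh}(\Gamma):S\rangle$, $\mathrm{p}_\Gamma(\mathrm S)=(\Gamma.\mathrm S,\Gamma,\mathrm{OV}(\Gamma))$, $\mathrm{v}_{\mathrm S}=((\Gamma.\mathrm S,S),\mathrm{fresh}(\Gamma))$, and $\langle(\Delta,\Gamma,\bar s),((\Delta,S[\bar s/\Gamma]),b)\rangle_{\mathrm S}=(\Delta,\Gamma.\mathrm S,(\bar s,b))$. *)

theory Defs
  imports Main
begin

section \<open>Syntax: preelements and pretypes\<close>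

text \<open>Variables have type 'v, function symbols type 'f, type symbols type 't.
  Using separate HOL types makes F and T disjoint and gives decidable equality.\<close>

datatype ('v, 'f) pelem = Var 'v | App 'f "('v, 'f) pelem list"

datatype ('v, 'f, 't) ptype = PTy 't "('v, 'f) pelem list"

fun varsE :: "('v, 'f) pelem \<Rightarrow> 'v set" where
  "varsE (Var x) = {x}"
| "varsE (App f ts) = (\<Union>t \<in> set ts. varsE t)"

fun varsT :: "('v, 'f, 't) ptype \<Rightarrow> 'v set" where
  "varsT (PTy S ts) = (\<Union>t \<in> set ts. varsE t)"

fun substE :: "('v \<Rightarrow> ('v, 'f) pelem) \<Rightarrow> ('v, 'f) pelem \<Rightarrow> ('v, 'f) pelem" where
  "substE \<sigma> (Var x) = \<sigma> x"
| "substE \<sigma> (App f ts) = App f (map (substE \<sigma>) ts)"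

fun substT :: "('v \<Rightarrow> ('v, 'f) pelem) \<Rightarrow> ('v, 'f, 't) ptype \<Rightarrow> ('v, 'f, 't) ptype" where
  "substT \<sigma> (PTy S ts) = PTy S (map (substE \<sigma>) ts)"

definition substL :: "'v list \<Rightarrow> ('v, 'f) pelem list \<Rightarrow> 'v \<Rightarrow> ('v, 'f) pelem" where
  "substL xs as x = (case map_of (zip xs as) x of None \<Rightarrow> Var x | Some a \<Rightarrow> a)"

type_synonym ('v, 'f, 't) pctx = "('v \<times> ('v, 'f, 't) ptype) list"

definition OV :: "('v, 'f, 't) pctx \<Rightarrow> 'v list" where
  "OV \<Gamma> = map fst \<Gamma>"

definition VC :: "('v, 'f, 't) pctx \<Rightarrow> 'v set" where
  "VC \<Gamma> = set (OV \<Gamma>)"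

definition precontext :: "('v set \<Rightarrow> 'v set) \<Rightarrow> ('v, 'f, 't) pctx \<Rightarrow> bool" where
  "precontext \<phi> \<Gamma> \<longleftrightarrow>
     (\<forall>k < length \<Gamma>. fst (\<Gamma> ! k) \<in> \<phi> (VC (take k \<Gamma>))
                     \<and> varsT (snd (\<Gamma> ! k)) \<subseteq> VC (take k \<Gamma>))"

fun TV_rev :: "('v, 'f, 't) pctx \<Rightarrow> 'v set" where
  "TV_rev [] = {}"
| "TV_rev ((x, A) # \<Gamma>r) = (TV_rev \<Gamma>r - varsT A) \<union> {x}"

definition TV :: "('v, 'f, 't) pctx \<Rightarrow> 'v set" where
  "TV \<Gamma> = TV_rev (rev \<Gamma>)"

text \<open>Determining sequences (indices are 0-based here: position i refers to the (i+1)-th entry).\<close>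

definition determining :: "('v, 'f, 't) pctx \<Rightarrow> nat list \<Rightarrow> bool" where
  "determining \<Gamma> is \<longleftrightarrow> sorted_wrt (<) is \<and> (\<forall>i \<in> set is. i < length \<Gamma>)
     \<and> TV \<Gamma> \<subseteq> {fst (\<Gamma> ! i) | i. i \<in> set is}"

definition select :: "'a list \<Rightarrow> nat list \<Rightarrow> 'a list" where
  "select as is = map (\<lambda>i. as ! i) is"

datatype ('v, 'f, 't) predecl =
    TDecl "('v, 'f, 't) pctx" 't "nat list"
  | FDecl "('v, 'f, 't) pctx" 'f "nat list" "('v, 'f, 't) ptype"

fun predecl_ok :: "('v set \<Rightarrow> 'v set) \<Rightarrow> ('v, 'f, 't) predecl \<Rightarrow> bool" where
  "predecl_ok \<phi> (TDecl \<Gamma> S is) \<longleftrightarrow> precontext \<phi> \<Gamma> \<and> determining \<Gamma> is"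
| "predecl_ok \<phi> (FDecl \<Gamma> f is U) \<longleftrightarrow> precontext \<phi> \<Gamma> \<and> determining \<Gamma> is \<and> varsT U \<subseteq> VC \<Gamma>"

definition presignature :: "('v set \<Rightarrow> 'v set) \<Rightarrow> ('v, 'f, 't) predecl set \<Rightarrow> bool" where
  "presignature \<phi> \<Sigma> \<longleftrightarrow> (\<forall>d \<in> \<Sigma>. predecl_ok \<phi> d)
     \<and> (\<forall>\<Gamma> S is \<Gamma>' is'. TDecl \<Gamma> S is \<in> \<Sigma> \<longrightarrow> TDecl \<Gamma>' S is' \<in> \<Sigma> \<longrightarrow> \<Gamma> = \<Gamma>' \<and> is = is')
     \<and> (\<forall>\<Gamma> f is U \<Gamma>' is' U'. FDecl \<Gamma> f is U \<in> \<Sigma> \<longrightarrow> FDecl \<Gamma>' f is' U' \<in> \<Sigma>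
           \<longrightarrow> \<Gamma> = \<Gamma>' \<and> is = is' \<and> U = U')"

section \<open>Judgements and the derivable judgements J(Sigma)\<close>

datatype ('v, 'f, 't) judg =
    JCtx "('v, 'f, 't) pctx"
  | JTy "('v, 'f, 't) pctx" "('v, 'f, 't) ptype"
  | JTm "('v, 'f, 't) pctx" "('v, 'f) pelem" "('v, 'f, 't) ptype"

text \<open>The judgements making up the context map  as : Delta -> Gamma  (relative to a set J of judgements);
  in the rules R4, R5 below this condition is written out inline.\<close>

definition cmapJ :: "('v, 'f, 't) judg set \<Rightarrow> ('v, 'f, 't) pctx \<Rightarrow> ('v, 'f, 't) pctx
                     \<Rightarrow> ('v, 'f) pelem list \<Rightarrow> bool" where
  "cmapJ J \<Delta> \<Gamma> as \<longleftrightarrow> JCtx \<Delta> \<in> J \<and> JCtx \<Gamma> \<in> J \<and> length as = length \<Gamma>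
     \<and> (\<forall>k < length \<Gamma>. JTm \<Delta> (as ! k)
            (substT (substL (take k (OV \<Gamma>)) (take k as)) (snd (\<Gamma> ! k))) \<in> J)"

inductive_set Jdg :: "('v set \<Rightarrow> 'v set) \<Rightarrow> ('v, 'f, 't) predecl set \<Rightarrow> ('v, 'f, 't) judg set"
  for \<phi> :: "'v set \<Rightarrow> 'v set" and \<Sigma> :: "('v, 'f, 't) predecl set" where
  R1: "JCtx [] \<in> Jdg \<phi> \<Sigma>"
| R2: "\<lbrakk> JCtx \<Gamma> \<in> Jdg \<phi> \<Sigma>; JTy \<Gamma> A \<in> Jdg \<phi> \<Sigma>; x \<in> \<phi> (VC \<Gamma>) \<rbrakk>
        \<Longrightarrow> JCtx (\<Gamma> @ [(x, A)]) \<in> Jdg \<phi> \<Sigma>"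
| R3: "\<lbrakk> JCtx \<Gamma> \<in> Jdg \<phi> \<Sigma>; i < length \<Gamma> \<rbrakk>
        \<Longrightarrow> JTm \<Gamma> (Var (fst (\<Gamma> ! i))) (snd (\<Gamma> ! i)) \<in> Jdg \<phi> \<Sigma>"
| R4: "\<lbrakk> TDecl \<Gamma> S is \<in> \<Sigma>; JCtx \<Delta> \<in> Jdg \<phi> \<Sigma>; JCtx \<Gamma> \<in> Jdg \<phi> \<Sigma>; length as = length \<Gamma>;
         \<forall>k < length \<Gamma>. JTm \<Delta> (as ! k)
            (substT (substL (take k (OV \<Gamma>)) (take k as)) (snd (\<Gamma> ! k))) \<in> Jdg \<phi> \<Sigma> \<rbrakk>
        \<Longrightarrow> JTy \<Delta> (PTy S (select as is)) \<in> Jdg \<phi> \<Sigma>"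
| R5: "\<lbrakk> FDecl \<Gamma> f is U \<in> \<Sigma>; JCtx \<Delta> \<in> Jdg \<phi> \<Sigma>; JCtx \<Gamma> \<in> Jdg \<phi> \<Sigma>; length as = length \<Gamma>;
         \<forall>k < length \<Gamma>. JTm \<Delta> (as ! k)
            (substT (substL (take k (OV \<Gamma>)) (take k as)) (snd (\<Gamma> ! k))) \<in> Jdg \<phi> \<Sigma>;
         JTy \<Delta> (substT (substL (OV \<Gamma>) as) U) \<in> Jdg \<phi> \<Sigma> \<rbrakk>
        \<Longrightarrow> JTm \<Delta> (App f (select as is)) (substT (substL (OV \<Gamma>) as) U) \<in> Jdg \<phi> \<Sigma>"

definition signature :: "('v set \<Rightarrow> 'v set) \<Rightarrow> ('v, 'f, 't) predecl set \<Rightarrow> bool" where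
  "signature \<phi> \<Sigma> \<longleftrightarrow> presignature \<phi> \<Sigma>
     \<and> (\<forall>\<Gamma> S is. TDecl \<Gamma> S is \<in> \<Sigma> \<longrightarrow> JCtx \<Gamma> \<in> Jdg \<phi> \<Sigma>)
     \<and> (\<forall>\<Gamma> f is U. FDecl \<Gamma> f is U \<in> \<Sigma> \<longrightarrow> JTy \<Gamma> U \<in> Jdg \<phi> \<Sigma>)"

section \<open>Variable systems\<close>

definition fresh_provider :: "('v set \<Rightarrow> 'v set) \<Rightarrow> ('v set \<Rightarrow> 'v) \<Rightarrow> bool" where
  "fresh_provider \<phi> fr \<longleftrightarrow> infinite (UNIV :: 'v set)
     \<and> (\<forall>X. finite X \<longrightarrow> \<phi> X \<subseteq> UNIV - X \<and> fr X \<in> \<phi> X)"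

definition de_Bruijn :: "('v set \<Rightarrow> 'v set) \<Rightarrow> ('v set \<Rightarrow> 'v) \<Rightarrow> bool" where
  "de_Bruijn \<phi> fr \<longleftrightarrow> (\<forall>X. finite X \<longrightarrow> \<phi> X = {fr X})"

section \<open>Categories with families\<close>

text \<open>Data of a cwf: objects 'o, morphisms 'm, types 'ty, terms 'tm.
  ext G A is G.A, pp G A is p_G(A), vv G A is v_A, pair G A f a is <f,a>_A.\<close>

record ('o, 'm, 'ty, 'tm) cwf_data =
  Ob :: "'o set"
  Hom :: "'o \<Rightarrow> 'o \<Rightarrow> 'm set"
  cmp :: "'m \<Rightarrow> 'm \<Rightarrow> 'm"
  idm :: "'o \<Rightarrow> 'm"
  trm :: "'o"
  Ty :: "'o \<Rightarrow> 'ty set"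
  tysub :: "'ty \<Rightarrow> 'm \<Rightarrow> 'ty"
  ext :: "'o \<Rightarrow> 'ty \<Rightarrow> 'o"
  pp :: "'o \<Rightarrow> 'ty \<Rightarrow> 'm"
  Tm :: "'o \<Rightarrow> 'ty \<Rightarrow> 'tm set"
  tmsub :: "'tm \<Rightarrow> 'm \<Rightarrow> 'tm"
  vv :: "'o \<Rightarrow> 'ty \<Rightarrow> 'tm"
  pair :: "'o \<Rightarrow> 'ty \<Rightarrow> 'm \<Rightarrow> 'tm \<Rightarrow> 'm"

definition is_category :: "('o, 'm, 'ty, 'tm, 'z) cwf_data_scheme \<Rightarrow> bool" where
  "is_category C \<longleftrightarrow>
     (\<forall>X Y f. f \<in> Hom C X Y \<longrightarrow> X \<in> Ob C \<and> Y \<in> Ob C)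
   \<and> (\<forall>X Y Z f g. f \<in> Hom C Y Z \<longrightarrow> g \<in> Hom C X Y \<longrightarrow> cmp C f g \<in> Hom C X Z)
   \<and> (\<forall>W X Y Z f g h. f \<in> Hom C Y Z \<longrightarrow> g \<in> Hom C X Y \<longrightarrow> h \<in> Hom C W X \<longrightarrow>
        cmp C (cmp C f g) h = cmp C f (cmp C g h))
   \<and> (\<forall>X \<in> Ob C. idm C X \<in> Hom C X X)
   \<and> (\<forall>X Y f. f \<in> Hom C X Y \<longrightarrow> cmp C (idm C Y) f = f \<and> cmp C f (idm C X) = f)"

definition is_terminal :: "('o, 'm, 'ty, 'tm, 'z) cwf_data_scheme \<Rightarrow> 'o \<Rightarrow> bool" where
  "is_terminal C T \<longleftrightarrow> T \<in> Ob C \<and> (\<forall>X \<in> Ob C. \<exists>!f. f \<in> Hom C X T)"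

definition is_cwf :: "('o, 'm, 'ty, 'tm, 'z) cwf_data_scheme \<Rightarrow> bool" where
  "is_cwf C \<longleftrightarrow> is_category C \<and> is_terminal C (trm C)
   \<comment> \<open>types and their substitution\<close>
   \<and> (\<forall>\<Gamma> \<Delta> A f. A \<in> Ty C \<Gamma> \<longrightarrow> f \<in> Hom C \<Delta> \<Gamma> \<longrightarrow> tysub C A f \<in> Ty C \<Delta>)
   \<and> (\<forall>\<Gamma> \<in> Ob C. \<forall>A \<in> Ty C \<Gamma>. tysub C A (idm C \<Gamma>) = A)
   \<and> (\<forall>\<Gamma> \<Delta> \<Theta> A f g. A \<in> Ty C \<Gamma> \<longrightarrow> f \<in> Hom C \<Delta> \<Gamma> \<longrightarrow> g \<in> Hom C \<Theta> \<Delta> \<longrightarrow>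
        tysub C A (cmp C f g) = tysub C (tysub C A f) g)
   \<comment> \<open>context comprehension and projection\<close>
   \<and> (\<forall>\<Gamma> \<in> Ob C. \<forall>A \<in> Ty C \<Gamma>. ext C \<Gamma> A \<in> Ob C \<and> pp C \<Gamma> A \<in> Hom C (ext C \<Gamma> A) \<Gamma>)
   \<comment> \<open>terms and their substitution\<close>
   \<and> (\<forall>\<Gamma> \<Delta> A a f. A \<in> Ty C \<Gamma> \<longrightarrow> a \<in> Tm C \<Gamma> A \<longrightarrow> f \<in> Hom C \<Delta> \<Gamma> \<longrightarrow>
        tmsub C a f \<in> Tm C \<Delta> (tysub C A f))
   \<and> (\<forall>\<Gamma> \<in> Ob C. \<forall>A \<in> Ty C \<Gamma>. \<forall>a \<in> Tm C \<Gamma> A. tmsub C a (idm C \<Gamma>) = a)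
   \<and> (\<forall>\<Gamma> \<Delta> \<Theta> A a f g. A \<in> Ty C \<Gamma> \<longrightarrow> a \<in> Tm C \<Gamma> A \<longrightarrow> f \<in> Hom C \<Delta> \<Gamma> \<longrightarrow>
        g \<in> Hom C \<Theta> \<Delta> \<longrightarrow> tmsub C a (cmp C f g) = tmsub C (tmsub C a f) g)
   \<comment> \<open>the variable\<close>
   \<and> (\<forall>\<Gamma> \<in> Ob C. \<forall>A \<in> Ty C \<Gamma>. vv C \<Gamma> A \<in> Tm C (ext C \<Gamma> A) (tysub C A (pp C \<Gamma> A)))
   \<comment> \<open>extension of morphisms and its laws\<close>
   \<and> (\<forall>\<Gamma> \<Delta> A f a. \<Gamma> \<in> Ob C \<longrightarrow> A \<in> Ty C \<Gamma> \<longrightarrow> f \<in> Hom C \<Delta> \<Gamma> \<longrightarrow> a \<in> Tm C \<Delta> (tysub C A f) \<longrightarrow>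
        pair C \<Gamma> A f a \<in> Hom C \<Delta> (ext C \<Gamma> A)
      \<and> cmp C (pp C \<Gamma> A) (pair C \<Gamma> A f a) = f
      \<and> tmsub C (vv C \<Gamma> A) (pair C \<Gamma> A f a) = a
      \<and> (\<forall>\<Theta> g. g \<in> Hom C \<Theta> \<Delta> \<longrightarrow>
           cmp C (pair C \<Gamma> A f a) g = pair C \<Gamma> A (cmp C f g) (tmsub C a g)))
   \<and> (\<forall>\<Gamma> \<Delta> A h. \<Gamma> \<in> Ob C \<longrightarrow> A \<in> Ty C \<Gamma> \<longrightarrow> h \<in> Hom C \<Delta> (ext C \<Gamma> A) \<longrightarrow>
        pair C \<Gamma> A (cmp C (pp C \<Gamma> A) h) (tmsub C (vv C \<Gamma> A) h) = h)"

definition ext_iter :: "('o, 'm, 'ty, 'tm, 'z) cwf_data_scheme \<Rightarrow> 'ty list \<Rightarrow> 'o" where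
  "ext_iter C As = foldl (ext C) (trm C) As"

definition is_tower :: "('o, 'm, 'ty, 'tm, 'z) cwf_data_scheme \<Rightarrow> 'ty list \<Rightarrow> bool" where
  "is_tower C As \<longleftrightarrow> (\<forall>k < length As. As ! k \<in> Ty C (ext_iter C (take k As)))"

definition is_contextual_cwf :: "('o, 'm, 'ty, 'tm, 'z) cwf_data_scheme \<Rightarrow> bool" where
  "is_contextual_cwf C \<longleftrightarrow> is_cwf C
     \<and> (\<forall>\<Gamma> \<in> Ob C. \<exists>!As. is_tower C As \<and> ext_iter C As = \<Gamma>)"

section \<open>The cwf F_Sigma\<close>

type_synonym ('v, 'f, 't) Fmor = "('v, 'f, 't) pctx \<times> ('v, 'f, 't) pctx \<times> ('v, 'f) pelem list"
type_synonym ('v, 'f, 't) Fty = "('v, 'f, 't) pctx \<times> ('v, 'f, 't) ptype"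
type_synonym ('v, 'f, 't) Ftm = "('v, 'f, 't) Fty \<times> ('v, 'f) pelem"

definition freshC :: "('v set \<Rightarrow> 'v) \<Rightarrow> ('v, 'f, 't) pctx \<Rightarrow> 'v" where
  "freshC fr \<Gamma> = fr (VC \<Gamma>)"

definition FSig :: "('v set \<Rightarrow> 'v set) \<Rightarrow> ('v set \<Rightarrow> 'v) \<Rightarrow> ('v, 'f, 't) predecl set
    \<Rightarrow> (('v, 'f, 't) pctx, ('v, 'f, 't) Fmor, ('v, 'f, 't) Fty, ('v, 'f, 't) Ftm) cwf_data" where
  "FSig \<phi> fr \<Sigma> = \<lparr>
     Ob = {\<Gamma>. precontext \<phi> \<Gamma> \<and> JCtx \<Gamma> \<in> Jdg \<phi> \<Sigma>},
     Hom = (\<lambda>\<Delta> \<Gamma>. {(\<Delta>, \<Gamma>, as) | as. precontext \<phi> \<Delta> \<and> precontext \<phi> \<Gamma>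
                                     \<and> cmapJ (Jdg \<phi> \<Sigma>) \<Delta> \<Gamma> as}),
     cmp = (\<lambda>(\<Gamma>, \<Theta>, ts) (\<Delta>, \<Gamma>', ss). (\<Delta>, \<Theta>, map (substE (substL (OV \<Gamma>) ss)) ts)),
     idm = (\<lambda>\<Gamma>. (\<Gamma>, \<Gamma>, map Var (OV \<Gamma>))),
     trm = [],
     Ty = (\<lambda>\<Gamma>. {(\<Gamma>, A) | A. JTy \<Gamma> A \<in> Jdg \<phi> \<Sigma>}),
     tysub = (\<lambda>(\<Gamma>, A) (\<Delta>, \<Gamma>', as). (\<Delta>, substT (substL (OV \<Gamma>) as) A)),
     ext = (\<lambda>\<Gamma> (\<Gamma>', S). \<Gamma> @ [(freshC fr \<Gamma>, S)]),
     pp = (\<lambda>\<Gamma> (\<Gamma>', S). (\<Gamma> @ [(freshC fr \<Gamma>, S)], \<Gamma>, map Var (OV \<Gamma>))),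
     Tm = (\<lambda>\<Gamma> (\<Gamma>', A). {((\<Gamma>, A), a) | a. \<Gamma>' = \<Gamma> \<and> JTm \<Gamma> a A \<in> Jdg \<phi> \<Sigma>}),
     tmsub = (\<lambda>((\<Gamma>, A), a) (\<Delta>, \<Gamma>', as).
                 ((\<Delta>, substT (substL (OV \<Gamma>) as) A), substE (substL (OV \<Gamma>) as) a)),
     vv = (\<lambda>\<Gamma> (\<Gamma>', S). ((\<Gamma> @ [(freshC fr \<Gamma>, S)], S), Var (freshC fr \<Gamma>))),
     pair = (\<lambda>\<Gamma> (\<Gamma>', S) (\<Delta>, \<Gamma>'', ss) (DA, b). (\<Delta>, \<Gamma> @ [(freshC fr \<Gamma>, S)], ss @ [b]))
   \<rparr>"

end

theory Submission
  imports Defs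
begin

lemma substE_cong: "(\<And>x. x \<in> varsE e \<Longrightarrow> \<sigma> x = \<tau> x) \<Longrightarrow> substE \<sigma> e = substE \<tau> e"
  by (induction e) auto

lemma substT_cong: "(\<And>x. x \<in> varsT A \<Longrightarrow> \<sigma> x = \<tau> x) \<Longrightarrow> substT \<sigma> A = substT \<tau> A"
  by (cases A) (auto intro: substE_cong)

lemma substE_comp: "substE \<sigma> (substE \<tau> e) = substE (\<lambda>x. substE \<sigma> (\<tau> x)) e"
  by (induction e) auto

lemma substT_comp: "substT \<sigma> (substT \<tau> A) = substT (\<lambda>x. substE \<sigma> (\<tau> x)) A"
  by (cases A) (auto simp: substE_comp)

lemma substE_Var[simp]: "substE Var e = e"
  by (induction e) (auto simp: map_idI)

lemma substT_Var[simp]: "substT Var A = A"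
  by (cases A) (auto simp: map_idI)

lemma substL_Var[simp]: "substL xs (map Var xs) = Var"
proof
  fix x show "substL xs (map Var xs) x = Var x"
    by (induction xs) (auto simp: substL_def split: option.splits)
qed

lemma substL_Cons: "substL (y#xs) (b#as) x = (if x = y then b else substL xs as x)"
  by (simp add: substL_def)

lemma substL_map:
  "length xs = length as \<Longrightarrow> x \<in> set xs \<Longrightarrow> substL xs (map f as) x = f (substL xs as x)"
proof (induction xs arbitrary: as)
  case Nil then show ?case by simp
next
  case (Cons y xs) then show ?case by (cases as) (auto simp: substL_Cons)
qed

lemma substL_take:
  "length xs = length as \<Longrightarrow> x \<in> set (take k xs) \<Longrightarrow> substL (take k xs) (take k as) x = substL xs as x"
proof (induction xs arbitrary: as k)
  case Nil then show ?case by simp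
next
  case (Cons y xs) then show ?case by (cases as; cases k) (auto simp: substL_Cons)
qed

lemma substL_append1:
  "length xs = length as \<Longrightarrow> x \<in> set xs \<Longrightarrow> substL (xs@ys) (as@bs) x = substL xs as x"
proof (induction xs arbitrary: as)
  case Nil then show ?case by simp
next
  case (Cons y xs) then show ?case by (cases as) (auto simp: substL_Cons)
qed

lemma substL_append2:
  "length xs = length as \<Longrightarrow> y \<notin> set xs \<Longrightarrow> substL (xs@[y]) (as@[b]) y = b"
proof (induction xs arbitrary: as)
  case Nil then show ?case by (simp add: substL_Cons)
next
  case (Cons z xs) then show ?case by (cases as) (auto simp: substL_Cons)
qed

lemma substL_nth:
  "distinct xs \<Longrightarrow> length xs = length as \<Longrightarrow> i < length xs \<Longrightarrow> substL xs as (xs!i) = as!i"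
proof (induction xs arbitrary: as i)
  case Nil then show ?case by simp
next
  case (Cons y xs) then show ?case by (cases as; cases i) (auto simp: substL_Cons)
qed

lemma substL_self_map:
  "distinct xs \<Longrightarrow> length xs = length as \<Longrightarrow> map (\<lambda>x. substL xs as x) xs = as"
  by (rule nth_equalityI) (auto simp: substL_nth)

lemma subst_comp_L:
  assumes "varsT A \<subseteq> set xs" "length xs = length as"
  shows "substT \<sigma> (substT (substL xs as) A) = substT (substL xs (map (substE \<sigma>) as)) A"
  unfolding substT_comp using assms by (intro substT_cong) (auto simp: substL_map)

lemma subst_comp_LE:
  assumes "varsE a \<subseteq> set xs" "length xs = length as"
  shows "substE \<sigma> (substE (substL xs as) a) = substE (substL xs (map (substE \<sigma>) as)) a"
  unfolding substE_comp using assms by (intro substE_cong) (auto simp: substL_map)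

lemma select_map: "\<forall>i \<in> set is. i < length as \<Longrightarrow> map f (select as is) = select (map f as) is"
  by (simp add: select_def)

lemma VC_append[simp]: "VC (\<Gamma> @ [(x,A)]) = insert x (VC \<Gamma>)"
  by (auto simp: VC_def OV_def)

lemma OV_append[simp]: "OV (\<Gamma> @ \<Delta>) = OV \<Gamma> @ OV \<Delta>" by (simp add: OV_def)
lemma OV_take: "OV (take k \<Gamma>) = take k (OV \<Gamma>)" by (simp add: OV_def take_map)
lemma length_OV[simp]: "length (OV \<Gamma>) = length \<Gamma>" by (simp add: OV_def)
lemma OV_nth: "k < length \<Gamma> \<Longrightarrow> OV \<Gamma> ! k = fst (\<Gamma> ! k)" by (simp add: OV_def)

lemma precontext_append:
  "precontext \<phi> (\<Gamma> @ [(x,A)]) \<longleftrightarrow> precontext \<phi> \<Gamma> \<and> x \<in> \<phi> (VC \<Gamma>) \<and> varsT A \<subseteq> VC \<Gamma>"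
  unfolding precontext_def
  by (auto simp: nth_append less_Suc_eq)


lemma distinct_OV:
  assumes "fresh_provider \<phi> fr" "precontext \<phi> \<Gamma>" shows "distinct (OV \<Gamma>)"
proof -
  have nk: "fst (\<Gamma> ! k) \<notin> VC (take k \<Gamma>)" if "k < length \<Gamma>" for k
  proof -
    have "finite (VC (take k \<Gamma>))" by (simp add: VC_def)
    then show ?thesis using assms that unfolding fresh_provider_def precontext_def by blast
  qed
  have "OV \<Gamma> ! i \<noteq> OV \<Gamma> ! j" if "i < j" "j < length \<Gamma>" for i j
  proof -
    have "OV \<Gamma> ! i \<in> VC (take j \<Gamma>)"
      using that by (simp add: VC_def OV_take in_set_conv_nth) (metis length_OV less_trans min.absorb4 nth_take)
    moreover have "fst (\<Gamma> ! j) \<notin> VC (take j \<Gamma>)" using that(2) by (rule nk)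
    moreover have "OV \<Gamma> ! j = fst (\<Gamma> ! j)" using that(2) by (rule OV_nth)
    ultimately show ?thesis by auto
  qed
  then show ?thesis
    unfolding distinct_conv_nth by (metis length_OV linorder_neqE_nat)
qed

lemma precontext_nth_vars: "precontext \<phi> \<Gamma> \<Longrightarrow> k < length \<Gamma> \<Longrightarrow> varsT (snd (\<Gamma> ! k)) \<subseteq> set (take k (OV \<Gamma>))"
  unfolding precontext_def by (simp add: VC_def OV_take)

definition jok :: "('v set \<Rightarrow> 'v set) \<Rightarrow> ('v, 'f, 't) predecl set \<Rightarrow> ('v, 'f, 't) judg \<Rightarrow> bool" where
  "jok \<phi> \<Sigma> j = (case j of JCtx \<Gamma> \<Rightarrow> precontext \<phi> \<Gamma>
      | JTy \<Gamma> A \<Rightarrow> JCtx \<Gamma> \<in> Jdg \<phi> \<Sigma> \<and> varsT A \<subseteq> VC \<Gamma>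
      | JTm \<Gamma> a A \<Rightarrow> JCtx \<Gamma> \<in> Jdg \<phi> \<Sigma> \<and> varsE a \<subseteq> VC \<Gamma> \<and> varsT A \<subseteq> VC \<Gamma>)"

lemma Jdg_ok:
  assumes sig: "presignature \<phi> \<Sigma>"
  shows "j \<in> Jdg \<phi> \<Sigma> \<Longrightarrow> jok \<phi> \<Sigma> j"
proof (induction rule: Jdg.induct)
  case R1 then show ?case by (simp add: jok_def precontext_def)
next
  case (R2 \<Gamma> A x) then show ?case by (simp add: jok_def precontext_append)
next
  case (R3 \<Gamma> i) then show ?case
  proof -
    have pc: "precontext \<phi> \<Gamma>" using R3.IH by (simp add: jok_def)
    have "varsT (snd (\<Gamma> ! i)) \<subseteq> VC \<Gamma>"
      using precontext_nth_vars[OF pc R3.hyps(2)] by (auto simp: VC_def dest: in_set_takeD)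
    moreover have "fst (\<Gamma> ! i) \<in> VC \<Gamma>" using R3.hyps(2) by (auto simp: VC_def OV_def)
    ultimately show ?thesis using R3(1) by (simp add: jok_def)
  qed
next
  case (R4 \<Gamma> S "is" \<Delta> as)
  have det: "\<forall>i\<in>set is. i < length \<Gamma>"
  proof -
    have "predecl_ok \<phi> (TDecl \<Gamma> S is)" using sig R4(1) unfolding presignature_def by blast
    then show ?thesis by (simp add: determining_def)
  qed
  have v: "varsE (as!k) \<subseteq> VC \<Delta>" if "k < length \<Gamma>" for k
    using R4(7) that by (auto simp: jok_def)
  show ?case using det v R4(2,6) by (auto simp: jok_def select_def)
next
  case (R5 \<Gamma> f "is" U \<Delta> as)
  have det: "\<forall>i\<in>set is. i < length \<Gamma>"
  proof -
    have "predecl_ok \<phi> (FDecl \<Gamma> f is U)" using sig R5(1) unfolding presignature_def by blast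
    then show ?thesis by (simp add: determining_def)
  qed
  have v: "varsE (as!k) \<subseteq> VC \<Delta>" if "k < length \<Gamma>" for k
    using R5 that by (auto simp: jok_def)
  show ?case using det v R5(2,6,9) by (auto simp: jok_def select_def)
qed


lemma Jdg_ctx: "presignature \<phi> \<Sigma> \<Longrightarrow> JCtx \<Gamma> \<in> Jdg \<phi> \<Sigma> \<Longrightarrow> precontext \<phi> \<Gamma>"
  using Jdg_ok[of \<phi> \<Sigma> "JCtx \<Gamma>"] by (simp add: jok_def)
lemma Jdg_ty: "presignature \<phi> \<Sigma> \<Longrightarrow> JTy \<Gamma> A \<in> Jdg \<phi> \<Sigma> \<Longrightarrow> JCtx \<Gamma> \<in> Jdg \<phi> \<Sigma> \<and> varsT A \<subseteq> VC \<Gamma>"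
  using Jdg_ok[of \<phi> \<Sigma> "JTy \<Gamma> A"] by (simp add: jok_def)
lemma Jdg_tm: "presignature \<phi> \<Sigma> \<Longrightarrow> JTm \<Gamma> a A \<in> Jdg \<phi> \<Sigma> \<Longrightarrow>
   JCtx \<Gamma> \<in> Jdg \<phi> \<Sigma> \<and> varsE a \<subseteq> VC \<Gamma> \<and> varsT A \<subseteq> VC \<Gamma>"
  using Jdg_ok[of \<phi> \<Sigma> "JTm \<Gamma> a A"] by (simp add: jok_def)

definition jsub :: "('v set \<Rightarrow> 'v set) \<Rightarrow> ('v, 'f, 't) predecl set \<Rightarrow> ('v, 'f, 't) judg \<Rightarrow> bool" where
  "jsub \<phi> \<Sigma> j = (case j of JCtx \<Gamma> \<Rightarrow> True
      | JTy \<Gamma> A \<Rightarrow> (\<forall>\<Delta> ss. cmapJ (Jdg \<phi> \<Sigma>) \<Delta> \<Gamma> ss \<longrightarrow>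
            JTy \<Delta> (substT (substL (OV \<Gamma>) ss) A) \<in> Jdg \<phi> \<Sigma>)
      | JTm \<Gamma> a A \<Rightarrow> (\<forall>\<Delta> ss. cmapJ (Jdg \<phi> \<Sigma>) \<Delta> \<Gamma> ss \<longrightarrow>
            JTm \<Delta> (substE (substL (OV \<Gamma>) ss) a) (substT (substL (OV \<Gamma>) ss) A) \<in> Jdg \<phi> \<Sigma>))"

lemma take_subst_eq:
  assumes pc: "precontext \<phi> \<Theta>" and k: "k < length \<Theta>" and len: "length as = length \<Theta>"
  shows "substT \<sigma> (substT (substL (take k (OV \<Theta>)) (take k as)) (snd (\<Theta> ! k)))
       = substT (substL (take k (OV \<Theta>)) (take k (map (substE \<sigma>) as))) (snd (\<Theta> ! k))"
  using subst_comp_L[OF precontext_nth_vars[OF pc k], of "take k as" \<sigma>] len k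
  by (simp add: take_map)

lemma Jdg_subst:
  assumes fp: "fresh_provider \<phi> fr" and sig: "presignature \<phi> \<Sigma>"
  shows "j \<in> Jdg \<phi> \<Sigma> \<Longrightarrow> jsub \<phi> \<Sigma> j"
proof (induction rule: Jdg.induct)
  case R1 then show ?case by (simp add: jsub_def)
next
  case (R2 \<Gamma> A x) then show ?case by (simp add: jsub_def)
next
  case (R3 \<Gamma> i)
  have pc: "precontext \<phi> \<Gamma>" using Jdg_ctx[OF sig R3.hyps(1)] .
  have d: "distinct (OV \<Gamma>)" using distinct_OV[OF fp pc] .
  show ?case unfolding jsub_def
  proof (simp, intro allI impI)
    fix \<Delta> ss assume cm: "cmapJ (Jdg \<phi> \<Sigma>) \<Delta> \<Gamma> ss"
    have len: "length ss = length \<Gamma>" using cm by (simp add: cmapJ_def)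
    have 1: "substL (OV \<Gamma>) ss (fst (\<Gamma> ! i)) = ss ! i"
      using substL_nth[OF d, of ss i] len R3.hyps(2) by (simp add: OV_nth)
    have 2: "substT (substL (OV \<Gamma>) ss) (snd (\<Gamma> ! i))
           = substT (substL (take i (OV \<Gamma>)) (take i ss)) (snd (\<Gamma> ! i))"
      using precontext_nth_vars[OF pc R3.hyps(2)] len
      by (intro substT_cong) (auto simp: substL_take)
    show "JTm \<Delta> (substL (OV \<Gamma>) ss (fst (\<Gamma> ! i))) (substT (substL (OV \<Gamma>) ss) (snd (\<Gamma> ! i))) \<in> Jdg \<phi> \<Sigma>"
      unfolding 1 2 using cm R3.hyps(2) by (simp add: cmapJ_def)
  qed
next
  case (R4 \<Theta> S "is" \<Gamma> as)
  have det: "\<forall>i\<in>set is. i < length \<Theta>"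
  proof -
    have "predecl_ok \<phi> (TDecl \<Theta> S is)" using sig R4.hyps(1) unfolding presignature_def by blast
    then show ?thesis by (simp add: determining_def)
  qed
  have pc: "precontext \<phi> \<Theta>" using Jdg_ctx[OF sig R4.hyps(3)] .
  show ?case unfolding jsub_def
  proof (simp, intro allI impI)
    fix \<Delta> ss assume cm: "cmapJ (Jdg \<phi> \<Sigma>) \<Delta> \<Gamma> ss"
    let ?\<sigma> = "substL (OV \<Gamma>) ss"
    have "JTy \<Delta> (PTy S (select (map (substE ?\<sigma>) as) is)) \<in> Jdg \<phi> \<Sigma>"
    proof (rule Jdg.R4[OF R4.hyps(1) _ R4.hyps(3)])
      show "JCtx \<Delta> \<in> Jdg \<phi> \<Sigma>" using cm by (simp add: cmapJ_def)
      show "length (map (substE ?\<sigma>) as) = length \<Theta>" using R4.hyps(4) by simp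
      show "\<forall>k<length \<Theta>. JTm \<Delta> (map (substE ?\<sigma>) as ! k)
          (substT (substL (take k (OV \<Theta>)) (take k (map (substE ?\<sigma>) as))) (snd (\<Theta> ! k))) \<in> Jdg \<phi> \<Sigma>"
      proof (intro allI impI)
        fix k assume k: "k < length \<Theta>"
        have "jsub \<phi> \<Sigma> (JTm \<Gamma> (as ! k) (substT (substL (take k (OV \<Theta>)) (take k as)) (snd (\<Theta> ! k))))"
          using R4.IH k by blast
        then have "JTm \<Delta> (substE ?\<sigma> (as ! k)) (substT ?\<sigma> (substT (substL (take k (OV \<Theta>)) (take k as)) (snd (\<Theta> ! k)))) \<in> Jdg \<phi> \<Sigma>"
          using cm by (simp add: jsub_def)
        then show "JTm \<Delta> (map (substE ?\<sigma>) as ! k)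
          (substT (substL (take k (OV \<Theta>)) (take k (map (substE ?\<sigma>) as))) (snd (\<Theta> ! k))) \<in> Jdg \<phi> \<Sigma>"
          using take_subst_eq[OF pc k R4.hyps(4)] k R4.hyps(4) by simp
      qed
    qed
    then show "JTy \<Delta> (PTy S (map (substE ?\<sigma>) (select as is))) \<in> Jdg \<phi> \<Sigma>"
    proof -
      have "map (substE ?\<sigma>) (select as is) = select (map (substE ?\<sigma>) as) is"
        using det R4.hyps(4) by (simp add: select_map)
      then show ?thesis using \<open>JTy \<Delta> (PTy S (select (map (substE ?\<sigma>) as) is)) \<in> Jdg \<phi> \<Sigma>\<close> by simp
    qed
  qed
next
  case (R5 \<Theta> f "is" U \<Gamma> as)
  have ok: "predecl_ok \<phi> (FDecl \<Theta> f is U)" using sig R5.hyps(1) unfolding presignature_def by blast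
  have det: "\<forall>i\<in>set is. i < length \<Theta>" using ok by (simp add: determining_def)
  have vU: "varsT U \<subseteq> set (OV \<Theta>)" using ok by (simp add: VC_def)
  have pc: "precontext \<phi> \<Theta>" using Jdg_ctx[OF sig R5.hyps(3)] .
  show ?case unfolding jsub_def
  proof (simp, intro allI impI)
    fix \<Delta> ss assume cm: "cmapJ (Jdg \<phi> \<Sigma>) \<Delta> \<Gamma> ss"
    let ?\<sigma> = "substL (OV \<Gamma>) ss"
    have eqU: "substT ?\<sigma> (substT (substL (OV \<Theta>) as) U) = substT (substL (OV \<Theta>) (map (substE ?\<sigma>) as)) U"
      using subst_comp_L[OF vU] R5.hyps(4) by simp
    have "JTm \<Delta> (App f (select (map (substE ?\<sigma>) as) is)) (substT (substL (OV \<Theta>) (map (substE ?\<sigma>) as)) U) \<in> Jdg \<phi> \<Sigma>"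
    proof (rule Jdg.R5[OF R5.hyps(1) _ R5.hyps(3)])
      show "JCtx \<Delta> \<in> Jdg \<phi> \<Sigma>" using cm by (simp add: cmapJ_def)
      show "length (map (substE ?\<sigma>) as) = length \<Theta>" using R5.hyps(4) by simp
      show "\<forall>k<length \<Theta>. JTm \<Delta> (map (substE ?\<sigma>) as ! k)
          (substT (substL (take k (OV \<Theta>)) (take k (map (substE ?\<sigma>) as))) (snd (\<Theta> ! k))) \<in> Jdg \<phi> \<Sigma>"
      proof (intro allI impI)
        fix k assume k: "k < length \<Theta>"
        have "jsub \<phi> \<Sigma> (JTm \<Gamma> (as ! k) (substT (substL (take k (OV \<Theta>)) (take k as)) (snd (\<Theta> ! k))))"
          using R5.IH k by blast
        then have "JTm \<Delta> (substE ?\<sigma> (as ! k)) (substT ?\<sigma> (substT (substL (take k (OV \<Theta>)) (take k as)) (snd (\<Theta> ! k)))) \<in> Jdg \<phi> \<Sigma>"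
          using cm by (simp add: jsub_def)
        then show "JTm \<Delta> (map (substE ?\<sigma>) as ! k)
          (substT (substL (take k (OV \<Theta>)) (take k (map (substE ?\<sigma>) as))) (snd (\<Theta> ! k))) \<in> Jdg \<phi> \<Sigma>"
          using take_subst_eq[OF pc k R5.hyps(4)] k R5.hyps(4) by simp
      qed
      have "jsub \<phi> \<Sigma> (JTy \<Gamma> (substT (substL (OV \<Theta>) as) U))" using R5.IH by blast
      then show "JTy \<Delta> (substT (substL (OV \<Theta>) (map (substE ?\<sigma>) as)) U) \<in> Jdg \<phi> \<Sigma>"
        using cm eqU unfolding jsub_def judg.case by metis
    qed
    then show "JTm \<Delta> (App f (map (substE ?\<sigma>) (select as is))) (substT ?\<sigma> (substT (substL (OV \<Theta>) as) U)) \<in> Jdg \<phi> \<Sigma>"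
    proof -
      have "map (substE ?\<sigma>) (select as is) = select (map (substE ?\<sigma>) as) is"
        using det R5.hyps(4) by (simp add: select_map)
      then show ?thesis using \<open>JTm \<Delta> (App f (select (map (substE ?\<sigma>) as) is)) _ \<in> Jdg \<phi> \<Sigma>\<close> eqU by simp
    qed
  qed
qed


lemma subst_ty:
  assumes "fresh_provider \<phi> fr" "presignature \<phi> \<Sigma>"
    "cmapJ (Jdg \<phi> \<Sigma>) \<Delta> \<Gamma> ss" "JTy \<Gamma> A \<in> Jdg \<phi> \<Sigma>"
  shows "JTy \<Delta> (substT (substL (OV \<Gamma>) ss) A) \<in> Jdg \<phi> \<Sigma>"
  using Jdg_subst[OF assms(1,2) assms(4)] assms(3) by (simp add: jsub_def)

lemma subst_tm:
  assumes "fresh_provider \<phi> fr" "presignature \<phi> \<Sigma>"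
    "cmapJ (Jdg \<phi> \<Sigma>) \<Delta> \<Gamma> ss" "JTm \<Gamma> a A \<in> Jdg \<phi> \<Sigma>"
  shows "JTm \<Delta> (substE (substL (OV \<Gamma>) ss) a) (substT (substL (OV \<Gamma>) ss) A) \<in> Jdg \<phi> \<Sigma>"
  using Jdg_subst[OF assms(1,2) assms(4)] assms(3) by (simp add: jsub_def)

lemma cmap_comp:
  assumes fp: "fresh_provider \<phi> fr" and sig: "presignature \<phi> \<Sigma>"
    and t: "cmapJ (Jdg \<phi> \<Sigma>) \<Gamma> \<Theta> ts" and s: "cmapJ (Jdg \<phi> \<Sigma>) \<Delta> \<Gamma> ss"
  shows "cmapJ (Jdg \<phi> \<Sigma>) \<Delta> \<Theta> (map (substE (substL (OV \<Gamma>) ss)) ts)"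
proof -
  have pc: "precontext \<phi> \<Theta>" using t Jdg_ctx[OF sig] by (simp add: cmapJ_def)
  have len: "length ts = length \<Theta>" using t by (simp add: cmapJ_def)
  have "JTm \<Delta> (map (substE (substL (OV \<Gamma>) ss)) ts ! k)
     (substT (substL (take k (OV \<Theta>)) (take k (map (substE (substL (OV \<Gamma>) ss)) ts))) (snd (\<Theta> ! k))) \<in> Jdg \<phi> \<Sigma>"
    if k: "k < length \<Theta>" for k
  proof -
    have "JTm \<Gamma> (ts ! k) (substT (substL (take k (OV \<Theta>)) (take k ts)) (snd (\<Theta> ! k))) \<in> Jdg \<phi> \<Sigma>"
      using t k by (simp add: cmapJ_def)
    from subst_tm[OF fp sig s this] show ?thesis
      using take_subst_eq[OF pc k len] k len by simp
  qed
  then show ?thesis using t s len by (simp add: cmapJ_def)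
qed

lemma cmap_id:
  assumes "JCtx \<Gamma> \<in> Jdg \<phi> \<Sigma>"
  shows "cmapJ (Jdg \<phi> \<Sigma>) \<Gamma> \<Gamma> (map Var (OV \<Gamma>))"
  using assms Jdg.R3[OF assms] by (simp add: cmapJ_def take_map OV_nth)

lemma fresh_in:
  assumes "fresh_provider \<phi> fr" shows "freshC fr \<Gamma> \<in> \<phi> (VC \<Gamma>)" "freshC fr \<Gamma> \<notin> VC \<Gamma>"
  using assms by (auto simp: fresh_provider_def freshC_def VC_def)

lemma ext_ctx:
  assumes fp: "fresh_provider \<phi> fr" and sig: "presignature \<phi> \<Sigma>"
    and "JTy \<Gamma> S \<in> Jdg \<phi> \<Sigma>"
  shows "JCtx (\<Gamma> @ [(freshC fr \<Gamma>, S)]) \<in> Jdg \<phi> \<Sigma>" "precontext \<phi> (\<Gamma> @ [(freshC fr \<Gamma>, S)])"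
proof -
  show 1: "JCtx (\<Gamma> @ [(freshC fr \<Gamma>, S)]) \<in> Jdg \<phi> \<Sigma>"
    using Jdg.R2[OF _ assms(3) fresh_in(1)[OF fp]] Jdg_ty[OF sig assms(3)] by blast
  show "precontext \<phi> (\<Gamma> @ [(freshC fr \<Gamma>, S)])" using Jdg_ctx[OF sig 1] .
qed

lemma pp_cmap:
  assumes fp: "fresh_provider \<phi> fr" and sig: "presignature \<phi> \<Sigma>"
    and "JTy \<Gamma> S \<in> Jdg \<phi> \<Sigma>"
  shows "cmapJ (Jdg \<phi> \<Sigma>) (\<Gamma> @ [(freshC fr \<Gamma>, S)]) \<Gamma> (map Var (OV \<Gamma>))"
proof -
  have c: "JCtx (\<Gamma> @ [(freshC fr \<Gamma>, S)]) \<in> Jdg \<phi> \<Sigma>" using ext_ctx[OF assms] by blast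
  have "JTm (\<Gamma> @ [(freshC fr \<Gamma>, S)]) (Var (fst (\<Gamma> ! k))) (snd (\<Gamma> ! k)) \<in> Jdg \<phi> \<Sigma>"
    if "k < length \<Gamma>" for k
    using Jdg.R3[OF c, of k] that by (simp add: nth_append)
  then show ?thesis using c Jdg_ty[OF sig assms(3)] by (simp add: cmapJ_def take_map OV_nth)
qed

lemma pair_cmap:
  assumes fp: "fresh_provider \<phi> fr" and sig: "presignature \<phi> \<Sigma>"
    and S: "JTy \<Gamma> S \<in> Jdg \<phi> \<Sigma>" and s: "cmapJ (Jdg \<phi> \<Sigma>) \<Delta> \<Gamma> ss"
    and b: "JTm \<Delta> b (substT (substL (OV \<Gamma>) ss) S) \<in> Jdg \<phi> \<Sigma>"
  shows "cmapJ (Jdg \<phi> \<Sigma>) \<Delta> (\<Gamma> @ [(freshC fr \<Gamma>, S)]) (ss @ [b])"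
proof -
  have c: "JCtx (\<Gamma> @ [(freshC fr \<Gamma>, S)]) \<in> Jdg \<phi> \<Sigma>" using ext_ctx[OF fp sig S] by blast
  have len: "length ss = length \<Gamma>" using s by (simp add: cmapJ_def)
  have "JTm \<Delta> ((ss @ [b]) ! k)
     (substT (substL (take k (OV (\<Gamma> @ [(freshC fr \<Gamma>, S)]))) (take k (ss @ [b]))) (snd ((\<Gamma> @ [(freshC fr \<Gamma>, S)]) ! k))) \<in> Jdg \<phi> \<Sigma>"
    if k: "k < Suc (length \<Gamma>)" for k
  proof (cases "k < length \<Gamma>")
    case True then show ?thesis using s len by (simp add: cmapJ_def nth_append)
  next
    case False then have "k = length \<Gamma>" using k by simp
    then show ?thesis using b len by (simp add: nth_append OV_def)
  qed
  then show ?thesis using c s len by (simp add: cmapJ_def)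
qed


context
  fixes \<phi> :: "'v set \<Rightarrow> 'v set" and fr :: "'v set \<Rightarrow> 'v"
    and \<Sigma> :: "('v, 'f, 't) predecl set"
  assumes fp: "fresh_provider \<phi> fr" and sig: "presignature \<phi> \<Sigma>"
begin

abbreviation "F \<equiv> FSig \<phi> fr \<Sigma>"
abbreviation "J \<equiv> Jdg \<phi> \<Sigma>"

lemma F_Ob: "\<Gamma> \<in> Ob F \<longleftrightarrow> JCtx \<Gamma> \<in> J"
  using Jdg_ctx[OF sig] by (auto simp: FSig_def)

lemma F_Hom: "f \<in> Hom F \<Delta> \<Gamma> \<longleftrightarrow> (\<exists>as. f = (\<Delta>, \<Gamma>, as) \<and> cmapJ J \<Delta> \<Gamma> as)"
  using Jdg_ctx[OF sig] by (auto simp: FSig_def cmapJ_def)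

lemma F_Ty: "A \<in> Ty F \<Gamma> \<longleftrightarrow> (\<exists>S. A = (\<Gamma>, S) \<and> JTy \<Gamma> S \<in> J)"
  by (auto simp: FSig_def)

lemma F_Tm: "a \<in> Tm F \<Gamma> (\<Gamma>', S) \<longleftrightarrow> (\<exists>b. a = ((\<Gamma>, S), b) \<and> \<Gamma>' = \<Gamma> \<and> JTm \<Gamma> b S \<in> J)"
  by (auto simp: FSig_def)

lemma F_simps:
  "cmp F (\<Gamma>, \<Theta>, ts) (\<Delta>, \<Gamma>', ss) = (\<Delta>, \<Theta>, map (substE (substL (OV \<Gamma>) ss)) ts)"
  "idm F \<Gamma> = (\<Gamma>, \<Gamma>, map Var (OV \<Gamma>))"
  "trm F = []"
  "tysub F (\<Gamma>, A) (\<Delta>, \<Gamma>', as) = (\<Delta>, substT (substL (OV \<Gamma>) as) A)"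
  "ext F \<Gamma> (\<Gamma>', S) = \<Gamma> @ [(freshC fr \<Gamma>, S)]"
  "pp F \<Gamma> (\<Gamma>', S) = (\<Gamma> @ [(freshC fr \<Gamma>, S)], \<Gamma>, map Var (OV \<Gamma>))"
  "tmsub F ((\<Gamma>, A), a) (\<Delta>, \<Gamma>', as) = ((\<Delta>, substT (substL (OV \<Gamma>) as) A), substE (substL (OV \<Gamma>) as) a)"
  "vv F \<Gamma> (\<Gamma>', S) = ((\<Gamma> @ [(freshC fr \<Gamma>, S)], S), Var (freshC fr \<Gamma>))"
  "pair F \<Gamma> (\<Gamma>', S) (\<Delta>, \<Gamma>'', ss) (DA, b) = (\<Delta>, \<Gamma> @ [(freshC fr \<Gamma>, S)], ss @ [b])"
  by (simp_all add: FSig_def)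

lemma OV_single[simp]: "OV [(x, A)] = [x]" by (simp add: OV_def)

lemma cmap_vars: "cmapJ J \<Gamma> \<Theta> ts \<Longrightarrow> t \<in> set ts \<Longrightarrow> varsE t \<subseteq> set (OV \<Gamma>)"
  unfolding cmapJ_def in_set_conv_nth using Jdg_tm[OF sig] by (fastforce simp: VC_def)

lemma cmap_len: "cmapJ J \<Gamma> \<Theta> ts \<Longrightarrow> length ts = length \<Theta>"
  by (simp add: cmapJ_def)

lemma cmap_distinct: "cmapJ J \<Gamma> \<Theta> ts \<Longrightarrow> distinct (OV \<Theta>) \<and> distinct (OV \<Gamma>)"
  unfolding cmapJ_def using distinct_OV[OF fp] Jdg_ctx[OF sig] by blast

lemma is_category_F: "is_category F"
proof -
  have c1: "X \<in> Ob F \<and> Y \<in> Ob F" if "f \<in> Hom F X Y" for X Y f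
    using that by (auto simp: F_Hom F_Ob cmapJ_def)
  have c2: "cmp F f g \<in> Hom F X Z" if "f \<in> Hom F Y Z" "g \<in> Hom F X Y" for X Y Z f g
    using that by (auto simp: F_Hom F_simps intro: cmap_comp[OF fp sig])
  have c3: "cmp F (cmp F f g) h = cmp F f (cmp F g h)"
    if H: "f \<in> Hom F Y Z" "g \<in> Hom F X Y" "h \<in> Hom F W X" for W X Y Z f g h
  proof -
    obtain ts ss rs where f: "f = (Y, Z, ts)" "cmapJ J Y Z ts"
      and g: "g = (X, Y, ss)" "cmapJ J X Y ss" and h: "h = (W, X, rs)" "cmapJ J W X rs"
      using H by (auto simp: F_Hom)
    have "map (substE (substL (OV X) rs)) (map (substE (substL (OV Y) ss)) ts)
        = map (substE (substL (OV Y) (map (substE (substL (OV X) rs)) ss))) ts"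
      using subst_comp_LE[OF cmap_vars[OF f(2)]] cmap_len[OF g(2)] by simp
    then show ?thesis using f g h by (simp add: F_simps)
  qed
  have c4: "idm F X \<in> Hom F X X" if "X \<in> Ob F" for X
    using that by (simp add: F_Ob F_Hom F_simps cmap_id)
  have c5: "cmp F (idm F Y) f = f \<and> cmp F f (idm F X) = f" if H: "f \<in> Hom F X Y" for X Y f
  proof -
    obtain ss where f: "f = (X, Y, ss)" "cmapJ J X Y ss" using H by (auto simp: F_Hom)
    have "map (substE (substL (OV Y) ss)) (map Var (OV Y)) = ss"
      using substL_self_map[of "OV Y" ss] cmap_distinct[OF f(2)] cmap_len[OF f(2)] by (simp add: comp_def)
    then show ?thesis using f by (simp add: F_simps map_idI comp_def)
  qed
  show ?thesis unfolding is_category_def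
    using c1 c2 c3 c4 c5 by blast
qed

lemma terminal_F: "is_terminal F (trm F)"
proof -
  have "[] \<in> Ob F" by (simp add: F_Ob Jdg.R1)
  moreover have "\<exists>!f. f \<in> Hom F X []" if "X \<in> Ob F" for X
  proof
    show "(X, [], []) \<in> Hom F X []" using that by (simp add: F_Hom F_Ob cmapJ_def Jdg.R1)
    show "f = (X, [], [])" if "f \<in> Hom F X []" for f using that by (auto simp: F_Hom cmapJ_def)
  qed
  ultimately show ?thesis by (simp add: is_terminal_def F_simps)
qed

lemma is_cwf_F: "is_cwf F"
proof -
  have t1: "tysub F A f \<in> Ty F \<Delta>" if "A \<in> Ty F \<Gamma>" "f \<in> Hom F \<Delta> \<Gamma>" for \<Gamma> \<Delta> A f
    using that by (auto simp: F_Ty F_Hom F_simps intro: subst_ty[OF fp sig])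
  have t2: "tysub F A (idm F \<Gamma>) = A" if "A \<in> Ty F \<Gamma>" for \<Gamma> A
    using that by (auto simp: F_Ty F_simps)
  have t3: "tysub F A (cmp F f g) = tysub F (tysub F A f) g"
    if H: "A \<in> Ty F \<Gamma>" "f \<in> Hom F \<Delta> \<Gamma>" "g \<in> Hom F \<Theta> \<Delta>" for \<Gamma> \<Delta> \<Theta> A f g
  proof -
    obtain S fs gs where A: "A = (\<Gamma>, S)" "JTy \<Gamma> S \<in> J" and f: "f = (\<Delta>, \<Gamma>, fs)" "cmapJ J \<Delta> \<Gamma> fs"
      and g: "g = (\<Theta>, \<Delta>, gs)" "cmapJ J \<Theta> \<Delta> gs" using H by (auto simp: F_Ty F_Hom)
    have "varsT S \<subseteq> set (OV \<Gamma>)" using Jdg_ty[OF sig A(2)] by (simp add: VC_def)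
    from subst_comp_L[OF this, of fs] cmap_len[OF f(2)] show ?thesis
      using A f g by (simp add: F_simps)
  qed
  have e1: "ext F \<Gamma> A \<in> Ob F \<and> pp F \<Gamma> A \<in> Hom F (ext F \<Gamma> A) \<Gamma>" if "\<Gamma> \<in> Ob F" "A \<in> Ty F \<Gamma>" for \<Gamma> A
    using that ext_ctx[OF fp sig] pp_cmap[OF fp sig] by (auto simp: F_Ty F_Ob F_Hom F_simps)
  have m1: "tmsub F a f \<in> Tm F \<Delta> (tysub F A f)"
    if H: "A \<in> Ty F \<Gamma>" "a \<in> Tm F \<Gamma> A" "f \<in> Hom F \<Delta> \<Gamma>" for \<Gamma> \<Delta> A a f
  proof -
    obtain S fs where A: "A = (\<Gamma>, S)" and f: "f = (\<Delta>, \<Gamma>, fs)" "cmapJ J \<Delta> \<Gamma> fs"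
      using H by (auto simp: F_Ty F_Hom)
    obtain b where a: "a = ((\<Gamma>, S), b)" "JTm \<Gamma> b S \<in> J" using H(2) A by (auto simp: F_Tm)
    show ?thesis using subst_tm[OF fp sig f(2) a(2)] A a f by (simp add: F_simps F_Tm)
  qed
  have m2: "tmsub F a (idm F \<Gamma>) = a" if "A \<in> Ty F \<Gamma>" "a \<in> Tm F \<Gamma> A" for \<Gamma> A a
    using that by (auto simp: F_Ty F_Tm F_simps)
  have m3: "tmsub F a (cmp F f g) = tmsub F (tmsub F a f) g"
    if H: "A \<in> Ty F \<Gamma>" "a \<in> Tm F \<Gamma> A" "f \<in> Hom F \<Delta> \<Gamma>" "g \<in> Hom F \<Theta> \<Delta>" for \<Gamma> \<Delta> \<Theta> A a f g
  proof -
    obtain S fs gs where A: "A = (\<Gamma>, S)" and f: "f = (\<Delta>, \<Gamma>, fs)" "cmapJ J \<Delta> \<Gamma> fs"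
      and g: "g = (\<Theta>, \<Delta>, gs)" "cmapJ J \<Theta> \<Delta> gs" using H by (auto simp: F_Ty F_Hom)
    obtain b where a: "a = ((\<Gamma>, S), b)" "JTm \<Gamma> b S \<in> J" using H(2) A by (auto simp: F_Tm)
    have v: "varsT S \<subseteq> set (OV \<Gamma>)" "varsE b \<subseteq> set (OV \<Gamma>)" using Jdg_tm[OF sig a(2)] by (auto simp: VC_def)
    show ?thesis using subst_comp_L[OF v(1), of fs] subst_comp_LE[OF v(2), of fs] cmap_len[OF f(2)] A a f g
      by (simp add: F_simps)
  qed
  have v1: "vv F \<Gamma> A \<in> Tm F (ext F \<Gamma> A) (tysub F A (pp F \<Gamma> A))" if H: "\<Gamma> \<in> Ob F" "A \<in> Ty F \<Gamma>" for \<Gamma> A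
  proof -
    obtain S where A: "A = (\<Gamma>, S)" "JTy \<Gamma> S \<in> J" using H by (auto simp: F_Ty)
    have c: "JCtx (\<Gamma> @ [(freshC fr \<Gamma>, S)]) \<in> J" using ext_ctx[OF fp sig A(2)] by blast
    have "JTm (\<Gamma> @ [(freshC fr \<Gamma>, S)]) (Var (freshC fr \<Gamma>)) S \<in> J"
      using Jdg.R3[OF c, of "length \<Gamma>"] by simp
    then show ?thesis using A by (simp add: F_simps F_Tm)
  qed
  have p1: "pair F \<Gamma> A f a \<in> Hom F \<Delta> (ext F \<Gamma> A)
      \<and> cmp F (pp F \<Gamma> A) (pair F \<Gamma> A f a) = f
      \<and> tmsub F (vv F \<Gamma> A) (pair F \<Gamma> A f a) = a
      \<and> (\<forall>\<Theta> g. g \<in> Hom F \<Theta> \<Delta> \<longrightarrow>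
           cmp F (pair F \<Gamma> A f a) g = pair F \<Gamma> A (cmp F f g) (tmsub F a g))"
    if H: "\<Gamma> \<in> Ob F" "A \<in> Ty F \<Gamma>" "f \<in> Hom F \<Delta> \<Gamma>" "a \<in> Tm F \<Delta> (tysub F A f)" for \<Gamma> \<Delta> A f a
  proof -
    obtain S ss where A: "A = (\<Gamma>, S)" "JTy \<Gamma> S \<in> J" and f: "f = (\<Delta>, \<Gamma>, ss)" "cmapJ J \<Delta> \<Gamma> ss"
      using H by (auto simp: F_Ty F_Hom)
    obtain b where a: "a = ((\<Delta>, substT (substL (OV \<Gamma>) ss) S), b)" "JTm \<Delta> b (substT (substL (OV \<Gamma>) ss) S) \<in> J"
      using H(4) A f by (auto simp: F_Tm F_simps)
    have len: "length ss = length \<Gamma>" using cmap_len[OF f(2)] .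
    have vS: "varsT S \<subseteq> set (OV \<Gamma>)" using Jdg_ty[OF sig A(2)] by (simp add: VC_def)
    have fn: "freshC fr \<Gamma> \<notin> set (OV \<Gamma>)" using fresh_in(2)[OF fp] by (simp add: VC_def)
    have d: "distinct (OV \<Gamma>)" using cmap_distinct[OF f(2)] by simp
    let ?\<tau> = "substL (OV \<Gamma> @ [freshC fr \<Gamma>]) (ss @ [b])"
    have q1: "pair F \<Gamma> A f a \<in> Hom F \<Delta> (ext F \<Gamma> A)"
      using pair_cmap[OF fp sig A(2) f(2) a(2)] A f a by (simp add: F_simps F_Hom)
    have "map ?\<tau> (OV \<Gamma>) = map (substL (OV \<Gamma>) ss) (OV \<Gamma>)"
      using substL_append1[of "OV \<Gamma>" ss] by (intro map_cong) (auto simp: len)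
    also have "\<dots> = ss" using substL_self_map[OF d, of ss] len by simp
    finally have q2: "cmp F (pp F \<Gamma> A) (pair F \<Gamma> A f a) = f" using A f a by (simp add: F_simps comp_def)
    have "substT ?\<tau> S = substT (substL (OV \<Gamma>) ss) S"
      using vS by (intro substT_cong) (auto simp: substL_append1 len)
    moreover have "?\<tau> (freshC fr \<Gamma>) = b" using substL_append2[OF _ fn, of ss b] len by simp
    ultimately have q3: "tmsub F (vv F \<Gamma> A) (pair F \<Gamma> A f a) = a" using A f a by (simp add: F_simps)
    have q4: "cmp F (pair F \<Gamma> A f a) g = pair F \<Gamma> A (cmp F f g) (tmsub F a g)" if "g \<in> Hom F \<Theta> \<Delta>" for \<Theta> g
      using that A f a by (auto simp: F_Hom F_simps)
    show ?thesis using q1 q2 q3 q4 by blast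
  qed
  have p2: "pair F \<Gamma> A (cmp F (pp F \<Gamma> A) h) (tmsub F (vv F \<Gamma> A) h) = h"
    if H: "\<Gamma> \<in> Ob F" "A \<in> Ty F \<Gamma>" "h \<in> Hom F \<Delta> (ext F \<Gamma> A)" for \<Gamma> \<Delta> A h
  proof -
    obtain S where A: "A = (\<Gamma>, S)" "JTy \<Gamma> S \<in> J" using H by (auto simp: F_Ty)
    obtain hs where h: "h = (\<Delta>, \<Gamma> @ [(freshC fr \<Gamma>, S)], hs)" "cmapJ J \<Delta> (\<Gamma> @ [(freshC fr \<Gamma>, S)]) hs"
      using H(3) A by (auto simp: F_Hom F_simps)
    have "length hs = Suc (length \<Gamma>)" using cmap_len[OF h(2)] by simp
    then obtain ss b where hs: "hs = ss @ [b]" and len: "length ss = length \<Gamma>"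
      by (metis append_butlast_last_id length_butlast diff_Suc_1 length_greater_0_conv zero_less_Suc)
    have fn: "freshC fr \<Gamma> \<notin> set (OV \<Gamma>)" using fresh_in(2)[OF fp] by (simp add: VC_def)
    have d: "distinct (OV \<Gamma>)" using cmap_distinct[OF h(2)] by simp
    let ?\<tau> = "substL (OV \<Gamma> @ [freshC fr \<Gamma>]) (ss @ [b])"
    have "map ?\<tau> (OV \<Gamma>) = map (substL (OV \<Gamma>) ss) (OV \<Gamma>)"
      using substL_append1[of "OV \<Gamma>" ss] by (intro map_cong) (auto simp: len)
    also have "\<dots> = ss" using substL_self_map[OF d, of ss] len by simp
    finally have e: "map ?\<tau> (OV \<Gamma>) = ss" .
    have "?\<tau> (freshC fr \<Gamma>) = b" using substL_append2[OF _ fn, of ss b] len by simp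
    then show ?thesis using A h hs e by (simp add: F_simps comp_def)
  qed
  show ?thesis unfolding is_cwf_def
    apply (intro conjI)
               apply (rule is_category_F)
              apply (rule terminal_F)
    subgoal by (intro allI impI ballI, rule t1; assumption)
    subgoal by (intro allI impI ballI, rule t2; assumption)
    subgoal by (intro allI impI ballI, rule t3; assumption)
    subgoal by (intro allI impI ballI, rule e1; assumption)
    subgoal by (intro allI impI ballI, rule m1; assumption)
    subgoal by (intro allI impI ballI, rule m2; assumption)
    subgoal by (intro allI impI ballI, rule m3; assumption)
    subgoal by (intro allI impI ballI, rule v1; assumption)
    subgoal by (intro allI impI, rule p1; assumption)
    subgoal by (intro allI impI, rule p2; assumption)
    done
qed

lemma ext_iter_snoc: "ext_iter F (As @ [A]) = ext F (ext_iter F As) A"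
  by (simp add: ext_iter_def)

lemma tower_snoc: "is_tower F (As @ [A]) \<longleftrightarrow> is_tower F As \<and> A \<in> Ty F (ext_iter F As)"
  unfolding is_tower_def by (auto simp: nth_append less_Suc_eq)

definition canon :: "('v, 'f, 't) pctx \<Rightarrow> ('v, 'f, 't) Fty list" where
  "canon \<Gamma> = map (\<lambda>k. (take k \<Gamma>, snd (\<Gamma> ! k))) [0..<length \<Gamma>]"

lemma canon_snoc: "canon (\<Gamma> @ [(x, S)]) = canon \<Gamma> @ [(\<Gamma>, S)]"
  unfolding canon_def by (auto simp: nth_append)

lemma tower_unique: "is_tower F As \<Longrightarrow> As = canon (ext_iter F As)"
proof (induction As rule: rev_induct)
  case Nil then show ?case by (simp add: canon_def ext_iter_def FSig_def)
next
  case (snoc A As)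
  then have t: "is_tower F As" and A: "A \<in> Ty F (ext_iter F As)" by (auto simp: tower_snoc)
  obtain S where "A = (ext_iter F As, S)" using A by (auto simp: F_Ty)
  then show ?case using snoc.IH[OF t] by (simp add: ext_iter_snoc F_simps canon_snoc)
qed

lemma Jdg_snoc_inv: "JCtx (\<Gamma> @ [(x, A)]) \<in> J \<Longrightarrow> JCtx \<Gamma> \<in> J \<and> JTy \<Gamma> A \<in> J \<and> x \<in> \<phi> (VC \<Gamma>)"
  by (erule Jdg.cases) auto

lemma tower_exists:
  assumes dB: "de_Bruijn \<phi> fr"
  shows "JCtx \<Gamma> \<in> J \<Longrightarrow> \<exists>As. is_tower F As \<and> ext_iter F As = \<Gamma>"
proof (induction \<Gamma> rule: rev_induct)
  case Nil then show ?case by (intro exI[of _ "[]"]) (simp add: is_tower_def ext_iter_def FSig_def)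
next
  case (snoc xA \<Gamma>)
  obtain x S where xA: "xA = (x, S)" by (cases xA)
  have inv: "JCtx \<Gamma> \<in> J" "JTy \<Gamma> S \<in> J" "x \<in> \<phi> (VC \<Gamma>)" using Jdg_snoc_inv snoc.prems xA by blast+
  have "finite (VC \<Gamma>)" by (simp add: VC_def)
  then have x: "x = freshC fr \<Gamma>" using dB inv(3) by (simp add: de_Bruijn_def freshC_def)
  obtain As where As: "is_tower F As" "ext_iter F As = \<Gamma>" using snoc.IH[OF inv(1)] by blast
  show ?case
  proof (intro exI[of _ "As @ [(\<Gamma>, S)]"] conjI)
    show "is_tower F (As @ [(\<Gamma>, S)])" using As inv(2) by (simp add: tower_snoc F_Ty)
    show "ext_iter F (As @ [(\<Gamma>, S)]) = \<Gamma> @ [xA]" using As xA x by (simp add: ext_iter_snoc F_simps)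
  qed
qed

lemma contextual_F: "de_Bruijn \<phi> fr \<Longrightarrow> is_contextual_cwf F"
  unfolding is_contextual_cwf_def
proof (intro conjI ballI is_cwf_F)
  fix \<Gamma> assume dB: "de_Bruijn \<phi> fr" and "\<Gamma> \<in> Ob F"
  then have "JCtx \<Gamma> \<in> J" by (simp add: F_Ob)
  then obtain As where As: "is_tower F As" "ext_iter F As = \<Gamma>" using tower_exists[OF dB] by blast
  show "\<exists>!As. is_tower F As \<and> ext_iter F As = \<Gamma>"
  proof (rule ex1I[of _ As])
    show "is_tower F As \<and> ext_iter F As = \<Gamma>" using As by blast
    show "Bs = As" if "is_tower F Bs \<and> ext_iter F Bs = \<Gamma>" for Bs
      using tower_unique[of As] tower_unique[of Bs] that As by simp
  qed
qed

end

theorem mainTheorem12: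
  fixes \<phi> :: "'v set \<Rightarrow> 'v set" and fr :: "'v set \<Rightarrow> 'v"
    and \<Sigma> :: "('v, 'f, 't) predecl set"
  assumes "fresh_provider \<phi> fr"
    and "signature \<phi> \<Sigma>"
  shows "is_cwf (FSig \<phi> fr \<Sigma>)
         \<and> (de_Bruijn \<phi> fr \<longrightarrow> is_contextual_cwf (FSig \<phi> fr \<Sigma>))"
proof -
  have sig: "presignature \<phi> \<Sigma>" using assms(2) by (simp add: signature_def)
  show ?thesis using is_cwf_F[OF assms(1) sig] contextual_F[OF assms(1) sig] by blast
qed

end
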